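(* Let $p$ be a prime, $n,m$ positive integers, $0\le s\le n$ an integer, and $F:\mathbb{F}_{p^n}\to\mathbb{F}_{p^m}$ a function. Put $\alpha=p^{2n-m}-p^{n+s-m}$ and $\beta=p^{n+s}+p^{2n-m}-p^{n+s-m}$. Then $F$ is a vectorial $s$-plateaued function if and only if for all $x\in\mathbb{F}_{p^n}$ and $y\in\mathbb{F}_{p^m}$, \[\sum_{a\in\mathbb{F}_{p^n}}\left|\{u\in\mathbb{F}_{p^n} : y=F(u+x-a)-F(u)+F(a)\}\right|=\begin{cases}\alpha & \text{if } y\neq F(x),\\ \beta & \text{if } y=F(x).\end{cases}\]
   Context: $\zeta_p=e^{2\pi i/p}$, $Tr_n(z)=\sum_{i=0}^{n-1}z^{p^i}$ (similarly $Tr_m$). For $b\in\mathbb{F}_{p^m}^*$, $F_b(x)=Tr_m(bF(x))$ with Walsh transform $\widehat{F_b}(a)=\sum_{x\in\mathbb{F}_{p^n}}\zeta_p^{F_b(x)-Tr_n(ax)}$. $F$ is vectorial $s$-plateaued if for every $b\in\mathbb{F}_{p^m}^*$ and every $a\in\mathbb{F}_{p^n}$, $|\widehat{F_b}(a)|\in\{0,p^{(n+s)/2}\}$. *)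

theory Defs
  imports Complex_Main "HOL-Computational_Algebra.Primes"
begin

definition tr :: "nat \<Rightarrow> nat \<Rightarrow> 'a::field \<Rightarrow> 'a" where
  "tr p n z = (\<Sum>i<n. z ^ (p ^ i))"

text \<open>Integer representative of an element of the prime field (least k with of_nat k = t).\<close>
definition fp_val :: "'a::field \<Rightarrow> nat" where
  "fp_val t = (LEAST k. of_nat k = t)"

definition zeta :: "nat \<Rightarrow> complex" where
  "zeta p = cis (2 * pi / real p)"

definition walsh :: "nat \<Rightarrow> nat \<Rightarrow> nat \<Rightarrow> ('a::{field,finite} \<Rightarrow> 'b::{field,finite}) \<Rightarrow> 'b \<Rightarrow> 'a \<Rightarrow> complex" where
  "walsh p n m F b a =
     (\<Sum>x\<in>UNIV. zeta p ^ fp_val (tr p m (b * F x)) / zeta p ^ fp_val (tr p n (a * x)))"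

definition vectorial_plateaued :: "nat \<Rightarrow> nat \<Rightarrow> nat \<Rightarrow> nat \<Rightarrow> ('a::{field,finite} \<Rightarrow> 'b::{field,finite}) \<Rightarrow> bool" where
  "vectorial_plateaued p n m s F =
     (\<forall>b::'b. b \<noteq> 0 \<longrightarrow> (\<forall>a::'a. cmod (walsh p n m F b a) \<in> {0, real p powr ((real n + real s) / 2)}))"

end

theory Submission
  imports Defs "HOL-Computational_Algebra.Polynomial" "HOL-Number_Theory.Cong"
begin


definition psi :: "nat \<Rightarrow> nat \<Rightarrow> 'a::field \<Rightarrow> complex" where
  "psi p n z = zeta p ^ fp_val (tr p n z)"

lemma zeta_pow_p: "p > 0 \<Longrightarrow> zeta p ^ p = 1"
  by (simp add: zeta_def DeMoivre)

lemma zeta_pow_mod: "p > 0 \<Longrightarrow> zeta p ^ a = zeta p ^ (a mod p)"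
proof -
  assume "p > 0"
  have "zeta p ^ a = zeta p ^ (p * (a div p) + a mod p)" by (simp only: mult_div_mod_eq)
  also have "\<dots> = (zeta p ^ p) ^ (a div p) * zeta p ^ (a mod p)"
    by (simp only: power_add power_mult)
  finally show ?thesis using zeta_pow_p[OF \<open>p>0\<close>] by simp
qed

lemma norm_zeta [simp]: "norm (zeta p) = 1"
  by (simp add: zeta_def)

lemma zeta_pow_ne1:
  assumes "0 < k" "k < p" shows "zeta p ^ k \<noteq> 1"
proof
  assume "zeta p ^ k = 1"
  hence "cis (real k * (2 * pi / real p)) = 1" by (simp add: zeta_def DeMoivre)
  hence "cos (real k * (2 * pi / real p)) = 1" by (metis cis.sel(1) one_complex.sel(1))
  from cos_one_2pi_int[THEN iffD1, OF this] obtain j :: int where j: "real k * (2 * pi / real p) = real_of_int j * 2 * pi"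
    by blast
  hence "real k / real p = j" using assms by (simp add: field_simps)
  moreover have "0 < real k / real p" "real k / real p < 1" using assms by auto
  ultimately show False by (metis of_int_0_less_iff of_int_less_1_iff not_le zero_less_iff_neq_zero int_one_le_iff_zero_less less_imp_of_nat_less of_int_less_iff of_int_1 order.strict_trans2 zero_le_imp_eq_int)
qed

context
  fixes p n :: nat
  assumes pp: "prime p" and np: "n > 0" and cardA: "card (UNIV::'a::{field,finite} set) = p ^ n"
begin

lemma CHAR_eq: "CHAR('a) = p"
proof -
  have "(\<Sum>x\<in>(UNIV::'a set). x + 1) = (\<Sum>x\<in>UNIV. x)"
    by (rule sum.reindex_bij_witness[of _ "\<lambda>z. z - 1" "\<lambda>z. z + 1"]) auto
  hence "of_nat (card (UNIV::'a set)) = (0::'a)" by (simp add: sum.distrib)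
  hence "of_nat (p ^ n) = (0::'a)" using cardA by simp
  hence "CHAR('a) dvd p ^ n" by (simp only: of_nat_eq_0_iff_char_dvd)
  moreover have "prime CHAR('a)"
    using prime_CHAR_semidom finite_imp_CHAR_pos[OF finite_UNIV] by blast
  ultimately have "CHAR('a) dvd p" using prime_dvd_power by blast
  thus ?thesis using \<open>prime CHAR('a)\<close> pp primes_dvd_imp_eq by blast
qed

lemma primeCHAR: "prime CHAR('a)" using CHAR_eq pp by simp

lemma of_nat_eq_mod: "(of_nat a :: 'a) = of_nat b \<longleftrightarrow> a mod p = b mod p"
  using of_nat_eq_iff_cong_CHAR[where 'a='a] CHAR_eq by (simp add: cong_def)

lemma pow_card: "(x::'a) ^ (p ^ n) = x"
proof (cases "x = 0")
  case False
  have "x * (\<Prod>y\<in>UNIV-{0}. x * y) = x * x ^ (card (UNIV :: 'a set) - 1) * \<Prod>(UNIV-{0})"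
    by (simp add: prod.distrib mult_ac)
  also have "x * x ^ (card (UNIV :: 'a set) - 1) = x ^ Suc (card (UNIV :: 'a set) - 1)"
    by (subst power_Suc) auto
  also have "Suc (card (UNIV :: 'a set) - 1) = card (UNIV :: 'a set)"
    using finite_UNIV_card_ge_0[where ?'a = 'a] by simp
  also have "(\<Prod>y\<in>UNIV-{0}. x * y) = (\<Prod>y\<in>UNIV-{0}. y)"
    by (rule prod.reindex_bij_witness[of _ "\<lambda>y. y / x" "\<lambda>y. x * y"]) (use False in auto)
  finally show ?thesis
    using cardA by simp
qed (use np pp prime_gt_0_nat in auto)

lemma frob: "((x::'a) + y) ^ (p ^ i) = x ^ (p ^ i) + y ^ (p ^ i)"
  using freshmans_dream'[OF primeCHAR] CHAR_eq by simp

lemma tr_add: "tr p n ((x::'a) + y) = tr p n x + tr p n y"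
  unfolding tr_def by (simp add: frob sum.distrib)

lemma tr_pow: "tr p n (z::'a) ^ p = tr p n z"
proof -
  have "tr p n z ^ p = (\<Sum>i<n. (z ^ (p ^ i)) ^ p)"
    unfolding tr_def by (rule freshmans_dream_sum[OF primeCHAR]) (simp add: CHAR_eq)
  also have "\<dots> = (\<Sum>i<n. z ^ (p ^ Suc i))"
    by (simp add: power_mult[symmetric] mult.commute)
  also have "\<dots> = (\<Sum>i<n. z ^ (p ^ i))"
  proof -
    have "(\<Sum>i<Suc n. z ^ (p ^ i)) = z ^ (p ^ 0) + (\<Sum>i<n. z ^ (p ^ Suc i))"
      by (rule sum.lessThan_Suc_shift)
    moreover have "(\<Sum>i<Suc n. z ^ (p ^ i)) = (\<Sum>i<n. z ^ (p ^ i)) + z ^ (p ^ n)"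
      by simp
    ultimately show ?thesis using pow_card by (simp add: add.commute)
  qed
  finally show ?thesis unfolding tr_def .
qed


lemma p_gt1: "p > 1" using pp prime_gt_1_nat by blast

lemma of_nat_pow_p: "(of_nat k :: 'a) ^ p = of_nat k"
proof (induction k)
  case 0 then show ?case using p_gt1 by simp
next
  case (Suc k)
  have "(of_nat k + 1 :: 'a) ^ (p ^ 1) = of_nat k ^ (p ^ 1) + 1 ^ (p ^ 1)" by (rule frob)
  then show ?case using Suc by (simp add: add.commute)
qed

lemma prime_field:
  assumes "(t::'a) ^ p = t" shows "\<exists>k<p. of_nat k = t"
proof -
  define P :: "'a poly" where "P = monom 1 p - [:0, 1:]"
  have polyP: "poly P x = x ^ p - x" for x by (simp add: P_def poly_monom)
  obtain k where pk: "p = Suc (Suc k)" using p_gt1 by (metis less_imp_Suc_add plus_1_eq_Suc)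
  have "coeff P p = 1" using p_gt1 by (simp add: P_def pk)
  hence P0: "P \<noteq> 0" by auto
  have "degree P \<le> p"
    unfolding P_def by (rule degree_diff_le) (use p_gt1 in \<open>auto simp: degree_monom_eq\<close>)
  hence cardR: "card {x. poly P x = 0} \<le> p" using card_poly_roots_bound[OF P0] by linarith
  have sub: "of_nat ` {..<p} \<subseteq> {x. poly P x = (0::'a)}" using of_nat_pow_p polyP by auto
  have inj: "inj_on (of_nat :: nat \<Rightarrow> 'a) {..<p}"
    by (auto simp: inj_on_def of_nat_eq_mod)
  have "card (of_nat ` {..<p} :: 'a set) = p" using card_image[OF inj] by simp
  hence "of_nat ` {..<p} = {x. poly P x = (0::'a)}"
    using card_subset_eq[OF _ sub] cardR by (metis (no_types, lifting) card_mono finite le_antisym sub)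
  moreover have "t \<in> {x. poly P x = 0}" using assms polyP by simp
  ultimately show ?thesis by (metis imageE lessThan_iff)
qed

lemma fp_val_props:
  assumes "(t::'a) ^ p = t" shows "fp_val t < p" "of_nat (fp_val t) = t"
proof -
  obtain k where k: "k < p" "of_nat k = t" using prime_field[OF assms] by blast
  show "of_nat (fp_val t) = t" unfolding fp_val_def by (rule LeastI[of _ k]) (use k in simp)
  have "fp_val t \<le> k" unfolding fp_val_def by (rule Least_le) (use k in simp)
  thus "fp_val t < p" using k by simp
qed

lemma tr0: "tr p n (0::'a) = 0"
  unfolding tr_def using p_gt1 by (intro sum.neutral) simp

lemma fp_val0: "fp_val (0::'a) = 0"
  unfolding fp_val_def by simp

lemma psi0: "psi p n (0::'a) = 1"
  by (simp add: psi_def tr0 fp_val0)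

lemma psi_add: "psi p n ((x::'a) + y) = psi p n x * psi p n y"
proof -
  have "of_nat (fp_val (tr p n (x+y))) = tr p n (x+y)" by (rule fp_val_props(2)[OF tr_pow])
  also have "\<dots> = tr p n x + tr p n y" by (rule tr_add)
  also have "\<dots> = of_nat (fp_val (tr p n x)) + of_nat (fp_val (tr p n y))"
    by (simp only: fp_val_props(2)[OF tr_pow])
  finally have "of_nat (fp_val (tr p n (x+y))) = (of_nat (fp_val (tr p n x) + fp_val (tr p n y)) :: 'a)"
    by simp
  hence "fp_val (tr p n (x+y)) mod p = (fp_val (tr p n x) + fp_val (tr p n y)) mod p"
    using of_nat_eq_mod by blast
  hence "zeta p ^ fp_val (tr p n (x+y)) = zeta p ^ (fp_val (tr p n x) + fp_val (tr p n y))"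
    using zeta_pow_mod p_gt1 by (metis less_trans zero_less_one)
  thus ?thesis by (simp add: psi_def power_add)
qed

lemma norm_psi [simp]: "norm (psi p n (z::'a)) = 1"
  by (simp add: psi_def norm_power)

lemma psi_neg: "psi p n (-(z::'a)) = cnj (psi p n z)"
proof -
  have "psi p n (-z) * psi p n z = 1" using psi_add[of "-z" z] psi0 by simp
  moreover have "psi p n z * cnj (psi p n z) = 1"
    using complex_norm_square[of "psi p n z"] by simp
  ultimately show ?thesis by (metis mult.commute mult.left_commute mult_1_right)
qed

lemma tr_nonzero: "\<exists>w::'a. tr p n w \<noteq> 0"
proof (rule ccontr)
  assume "\<not> ?thesis"
  hence all: "\<forall>w::'a. tr p n w = 0" by blast
  define Q :: "'a poly" where "Q = (\<Sum>i<n. monom 1 (p ^ i))"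
  have polyQ: "poly Q x = tr p n x" for x by (simp add: Q_def poly_sum poly_monom tr_def)
  have inj: "p ^ i = p ^ j \<longleftrightarrow> i = j" for i j using p_gt1 by (simp add: power_inject_exp)
  have "coeff Q (p ^ (n - 1)) = (\<Sum>i<n. if p ^ i = p ^ (n-1) then 1 else 0)"
    by (simp add: Q_def coeff_sum coeff_monom)
  also have "\<dots> = (\<Sum>i\<in>{n-1}. 1)"
    using np by (intro sum.mono_neutral_cong_right) (auto simp: inj)
  finally have "coeff Q (p ^ (n - 1)) = 1" by simp
  hence Q0: "Q \<noteq> 0" by auto
  have "degree Q \<le> p ^ (n - 1)"
  proof (rule degree_le, intro allI impI)
    fix i assume "p ^ (n - 1) < i"
    moreover have "p ^ j \<le> p ^ (n - 1)" if "j < n" for j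
      using that p_gt1 by (intro power_increasing) auto
    ultimately have "\<forall>j<n. p ^ j \<noteq> i" by (metis leD)
    thus "coeff Q i = 0" by (simp add: Q_def coeff_sum coeff_monom)
  qed
  moreover have "p ^ (n - 1) < p ^ n" using p_gt1 np by (intro power_strict_increasing) auto
  moreover have "card {x. poly Q x = 0} = p ^ n" using all polyQ cardA by simp
  ultimately show False using card_poly_roots_bound[OF Q0] by linarith
qed

lemma psi_nontriv: "\<exists>w::'a. psi p n w \<noteq> 1"
proof -
  obtain w :: 'a where w: "tr p n w \<noteq> 0" using tr_nonzero by blast
  have "fp_val (tr p n w) \<noteq> 0" using fp_val_props(2)[OF tr_pow, of w] w by (metis of_nat_0)
  moreover have "fp_val (tr p n w) < p" using fp_val_props(1)[OF tr_pow] .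
  ultimately have "psi p n w \<noteq> 1" unfolding psi_def by (intro zeta_pow_ne1) auto
  thus ?thesis by blast
qed

lemma orth: "(\<Sum>w\<in>UNIV. psi p n (w * (c::'a))) = (if c = 0 then of_nat (p ^ n) else 0)"
proof (cases "c = 0")
  case True then show ?thesis using cardA by (simp add: psi0)
next
  case False
  have "(\<Sum>w\<in>UNIV. psi p n (w * c)) = (\<Sum>w\<in>UNIV. psi p n (w::'a))"
    by (rule sum.reindex_bij_witness[where i="\<lambda>z. z / c" and j="\<lambda>z. z * c"]) (use False in auto)
  moreover obtain w0 :: 'a where w0: "psi p n w0 \<noteq> 1" using psi_nontriv by blast
  moreover have "(\<Sum>w\<in>UNIV. psi p n (w::'a)) = (\<Sum>w\<in>UNIV. psi p n (w + w0))"
    by (rule sum.reindex_bij_witness[where i="\<lambda>z. z + w0" and j="\<lambda>z. z - w0"]) auto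
  moreover have "(\<Sum>w\<in>UNIV. psi p n (w + w0)) = (\<Sum>w\<in>UNIV. psi p n (w::'a)) * psi p n w0"
    by (simp add: psi_add sum_distrib_right)
  ultimately show ?thesis using False
    by (metis (no_types, lifting) mult_cancel_left1)
qed

end



lemma conv_identity:
  fixes \<psi> :: "'a::{field,finite} \<Rightarrow> complex" and f g :: "'a \<Rightarrow> complex"
  assumes add: "\<And>x y. \<psi> (x + y) = \<psi> x * \<psi> y"
  shows "(\<Sum>x\<in>UNIV. (\<Sum>a\<in>UNIV. \<Sum>u\<in>UNIV. f (u + x - a) * g u * f a) * \<psi> (-(w*x)))
       = (\<Sum>z\<in>UNIV. f z * \<psi> (-(w*z))) * (\<Sum>u\<in>UNIV. g u * \<psi> (w*u)) * (\<Sum>a\<in>UNIV. f a * \<psi> (-(w*a)))"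
proof -
  define W where "W = (\<Sum>z\<in>UNIV. f z * \<psi> (-(w*z)))"
  have inner: "(\<Sum>x\<in>UNIV. f (u + x - a) * \<psi> (-(w*x))) = W * \<psi> (w*u) * \<psi> (-(w*a))" for a u
  proof -
    have "(\<Sum>x\<in>UNIV. f (u + x - a) * \<psi> (-(w*x))) = (\<Sum>z\<in>UNIV. f z * \<psi> (-(w*(z - u + a))))"
      by (rule sum.reindex_bij_witness[where i="\<lambda>z. z - u + a" and j="\<lambda>x. u + x - a"]) (auto simp: algebra_simps)
    also have "\<dots> = (\<Sum>z\<in>UNIV. f z * \<psi> (-(w*z)) * \<psi> (w*u) * \<psi> (-(w*a)))"
    proof (rule sum.cong[OF refl])
      fix z
      have "-(w*(z - u + a)) = (-(w*z) + w*u) + (-(w*a))" by (simp add: algebra_simps)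
      hence "\<psi> (-(w*(z - u + a))) = \<psi> (-(w*z)) * \<psi> (w*u) * \<psi> (-(w*a))" by (simp only: add)
      thus "f z * \<psi> (-(w*(z - u + a))) = f z * \<psi> (-(w*z)) * \<psi> (w*u) * \<psi> (-(w*a))" by simp
    qed
    also have "\<dots> = W * \<psi> (w*u) * \<psi> (-(w*a))"
      unfolding W_def by (simp add: sum_distrib_right)
    finally show ?thesis .
  qed
  have "(\<Sum>x\<in>UNIV. (\<Sum>a\<in>UNIV. \<Sum>u\<in>UNIV. f (u + x - a) * g u * f a) * \<psi> (-(w*x)))
      = (\<Sum>x\<in>UNIV. \<Sum>a\<in>UNIV. \<Sum>u\<in>UNIV. f (u + x - a) * \<psi> (-(w*x)) * (g u * f a))"
    by (simp only: sum_distrib_right) (simp add: mult_ac)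
  also have "\<dots> = (\<Sum>a\<in>UNIV. \<Sum>u\<in>UNIV. \<Sum>x\<in>UNIV. f (u + x - a) * \<psi> (-(w*x)) * (g u * f a))"
    by (subst sum.swap) (rule sum.cong[OF refl], rule sum.swap)
  also have "\<dots> = (\<Sum>a\<in>UNIV. \<Sum>u\<in>UNIV. W * \<psi> (w*u) * \<psi> (-(w*a)) * (g u * f a))"
    by (intro sum.cong[OF refl]) (simp only: sum_distrib_right[symmetric] inner)
  also have "\<dots> = (\<Sum>a\<in>UNIV. (f a * \<psi> (-(w*a))) * (W * (\<Sum>u\<in>UNIV. g u * \<psi> (w*u))))"
    by (rule sum.cong[OF refl]) (simp add: sum_distrib_left mult_ac)
  also have "\<dots> = (\<Sum>a\<in>UNIV. f a * \<psi> (-(w*a))) * (W * (\<Sum>u\<in>UNIV. g u * \<psi> (w*u)))"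
    by (rule sum_distrib_right[symmetric])
  also have "\<dots> = W * (\<Sum>u\<in>UNIV. g u * \<psi> (w*u)) * (\<Sum>a\<in>UNIV. f a * \<psi> (-(w*a)))"
    by (simp only: mult_ac)
  finally show ?thesis unfolding W_def .
qed

lemma inversion:
  fixes \<psi> :: "'a::{field,finite} \<Rightarrow> complex" and h :: "'a \<Rightarrow> complex"
  assumes add: "\<And>x y. \<psi> (x + y) = \<psi> x * \<psi> y"
    and orth: "\<And>c. (\<Sum>w\<in>UNIV. \<psi> (w * c)) = (if c = 0 then N else 0)"
    and N: "N \<noteq> 0"
    and H: "\<And>w. (\<Sum>x\<in>UNIV. h x * \<psi> (-(w*x))) = 0"
  shows "h y = 0"
proof -
  have "0 = (\<Sum>w\<in>UNIV. (\<Sum>x\<in>UNIV. h x * \<psi> (-(w*x))) * \<psi> (w*y))" by (simp add: H)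
  also have "\<dots> = (\<Sum>x\<in>UNIV. h x * (\<Sum>w\<in>UNIV. \<psi> (w * (y - x))))"
  proof -
    have "\<psi> (-(w*x)) * \<psi> (w*y) = \<psi> (w * (y - x))" for w x
      using add[of "-(w*x)" "w*y"] by (simp add: algebra_simps)
    hence "(\<Sum>w\<in>UNIV. (\<Sum>x\<in>UNIV. h x * \<psi> (-(w*x))) * \<psi> (w*y))
        = (\<Sum>w\<in>UNIV. \<Sum>x\<in>UNIV. h x * \<psi> (w * (y - x)))"
      by (simp add: sum_distrib_right mult.assoc)
    also have "\<dots> = (\<Sum>x\<in>UNIV. h x * (\<Sum>w\<in>UNIV. \<psi> (w * (y - x))))"
      by (subst sum.swap) (simp add: sum_distrib_left)
    finally show ?thesis .
  qed
  also have "\<dots> = (\<Sum>x\<in>UNIV. if x = y then h x * N else 0)"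
    by (rule sum.cong[OF refl]) (simp add: orth)
  also have "\<dots> = h y * N" by simp
  finally show ?thesis using N by simp
qed



lemma card_indicator:
  "(of_nat (card {u::'a::finite. P u}) :: complex) = (\<Sum>u\<in>UNIV. if P u then 1 else 0)"
  by (simp add: sum.If_cases)



lemma psi_neg_mult: "prime p \<Longrightarrow> 0 < n \<Longrightarrow> card (UNIV::'a::{field,finite} set) = p ^ n \<Longrightarrow>
  psi p n (-(z::'a)) * psi p n z = 1"
  using psi_add[of p n "-z" z] psi0[of p n, where 'a='a] by simp

lemma cnj_psi: "prime p \<Longrightarrow> 0 < n \<Longrightarrow> card (UNIV::'a::{field,finite} set) = p ^ n \<Longrightarrow>
  cnj (psi p n (z::'a)) = psi p n (-z)"
  using psi_neg by metis

theorem mainTheorem2: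
  fixes p n m s :: nat
    and F :: "'a::{field,finite} \<Rightarrow> 'b::{field,finite}"
  assumes "prime p" and "n > 0" and "m > 0" and "s \<le> n"
    and "card (UNIV::'a set) = p ^ n" and "card (UNIV::'b set) = p ^ m"
  shows "vectorial_plateaued p n m s F \<longleftrightarrow>
    (\<forall>x::'a. \<forall>y::'b.
       real (\<Sum>a\<in>UNIV. card {u::'a. y = F (u + x - a) - F u + F a}) =
       (if y \<noteq> F x
        then real p powr (2 * real n - real m) - real p powr (real n + real s - real m)
        else real p powr (real n + real s) + real p powr (2 * real n - real m)
               - real p powr (real n + real s - real m)))"
proof -
  note pA = assms(1) assms(2) assms(5)
  note pB = assms(1) assms(3) assms(6)
  have p0: "p > 0" using assms(1) prime_gt_0_nat by blast
  define \<psi>A :: "'a \<Rightarrow> complex" where "\<psi>A = psi p n"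
  define \<psi>B :: "'b \<Rightarrow> complex" where "\<psi>B = psi p m"
  have addA: "\<psi>A (x + y) = \<psi>A x * \<psi>A y" for x y unfolding \<psi>A_def by (rule psi_add[OF pA])
  have addB: "\<psi>B (x + y) = \<psi>B x * \<psi>B y" for x y unfolding \<psi>B_def by (rule psi_add[OF pB])
  have orthA: "(\<Sum>w\<in>UNIV. \<psi>A (w * c)) = (if c = 0 then of_nat (p ^ n) else 0)" for c
    unfolding \<psi>A_def by (rule orth[OF pA])
  have orthB: "(\<Sum>w\<in>UNIV. \<psi>B (w * c)) = (if c = 0 then of_nat (p ^ m) else 0)" for c
    unfolding \<psi>B_def by (rule orth[OF pB])
  have A0: "\<psi>A 0 = 1" unfolding \<psi>A_def by (rule psi0[OF pA])
  have B0: "\<psi>B 0 = 1" unfolding \<psi>B_def by (rule psi0[OF pB])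
  have negA: "\<psi>A (-z) * \<psi>A z = 1" for z unfolding \<psi>A_def by (rule psi_neg_mult[OF pA])
  have cnjA: "cnj (\<psi>A z) = \<psi>A (-z)" for z unfolding \<psi>A_def by (rule cnj_psi[OF pA])
  have cnjB: "cnj (\<psi>B z) = \<psi>B (-z)" for z unfolding \<psi>B_def by (rule cnj_psi[OF pB])
  define f where "f b x = \<psi>B (b * F x)" for b x
  define W where "W b w = (\<Sum>x\<in>UNIV. f b x * \<psi>A (-(w*x)))" for b w
  define S where "S b x = (\<Sum>a\<in>UNIV. \<Sum>u\<in>UNIV. \<psi>B (b * (F (u + x - a) - F u + F a)))" for b x
  define Nc where "Nc x y = (\<Sum>a\<in>UNIV. card {u::'a. y = F (u + x - a) - F u + F a})" for x y
  have walsh_eq: "walsh p n m F b w = W b w" for b w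
  proof -
    have "1 / \<psi>A (w*x) = \<psi>A (-(w*x))" for x
    proof -
      have nz: "\<psi>A (w*x) \<noteq> 0" using negA[of "w*x"] by auto
      show ?thesis using negA[of "w*x"] nz by (simp add: field_simps)
    qed
    note inv = this
    show ?thesis unfolding walsh_def W_def f_def
    proof (rule sum.cong[OF refl])
      fix x
      have "zeta p ^ fp_val (tr p m (b * F x)) / zeta p ^ fp_val (tr p n (w * x)) = \<psi>B (b * F x) / \<psi>A (w * x)"
        by (simp add: \<psi>A_def \<psi>B_def psi_def)
      also have "\<dots> = \<psi>B (b * F x) * (1 / \<psi>A (w * x))" by simp
      also have "\<dots> = \<psi>B (b * F x) * \<psi>A (-(w * x))" by (simp only: inv)
      finally show "zeta p ^ fp_val (tr p m (b * F x)) / zeta p ^ fp_val (tr p n (w * x)) = \<psi>B (b * F x) * \<psi>A (-(w * x))" .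
    qed
  qed
  have K: "(\<Sum>x\<in>UNIV. S b x * \<psi>A (-(w*x))) = of_real ((cmod (W b w))\<^sup>2) * W b w" for b w
  proof -
    have S_exp: "S b x = (\<Sum>a\<in>UNIV. \<Sum>u\<in>UNIV. f b (u + x - a) * \<psi>B (-(b * F u)) * f b a)" for x
    proof -
      have "\<psi>B (b * (F (u + x - a) - F u + F a)) = f b (u + x - a) * \<psi>B (-(b * F u)) * f b a" for a u
      proof -
        have "b * (F (u + x - a) - F u + F a) = b * F (u + x - a) + (-(b * F u)) + b * F a"
          by (simp add: algebra_simps)
        thus ?thesis unfolding f_def by (simp only: addB)
      qed
      thus ?thesis unfolding S_def by simp
    qed
    have cW: "cnj (W b w) = (\<Sum>u\<in>UNIV. \<psi>B (-(b * F u)) * \<psi>A (w*u))"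
      unfolding W_def f_def by (simp add: cnjA cnjB)
    have "(\<Sum>x\<in>UNIV. S b x * \<psi>A (-(w*x))) = W b w * cnj (W b w) * W b w"
      unfolding S_exp cW unfolding W_def by (rule conv_identity[where \<psi>=\<psi>A, OF addA])
    also have "\<dots> = of_real ((cmod (W b w))\<^sup>2) * W b w"
      by (simp only: complex_norm_square)
    finally show ?thesis .
  qed
  have Nc_sum: "(of_nat (Nc x y) :: complex) = (\<Sum>a\<in>UNIV. \<Sum>u\<in>UNIV. if y = F (u + x - a) - F u + F a then 1 else 0)" for x y
    unfolding Nc_def by (simp add: card_indicator)
  have pw1: "real p powr (2 * real n - real m) = real p ^ (2*n) / real p ^ m"
    using p0 by (simp add: powr_diff powr_realpow[symmetric])
  have pw2: "real p powr (real n + real s - real m) = real p ^ (n+s) / real p ^ m"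
    using p0 by (simp add: powr_diff powr_realpow[symmetric])
  have pw3: "real p powr (real n + real s) = real p ^ (n+s)"
    using p0 by (simp add: powr_realpow[symmetric])
  have pw4: "(real p powr ((real n + real s) / 2))\<^sup>2 = real p ^ (n+s)"
  proof -
    have "(real p powr ((real n + real s) / 2))\<^sup>2 = real p powr ((real n + real s) / 2 + (real n + real s) / 2)"
      by (simp only: power2_eq_square powr_add[symmetric])
    also have "\<dots> = real p powr (real n + real s)" by simp
    finally show ?thesis using pw3 by simp
  qed
  have pm0: "(of_nat (p ^ m) :: complex) \<noteq> 0" using p0 by simp
  have pn0: "(of_nat (p ^ n) :: complex) \<noteq> 0" using p0 by simp
  show ?thesis
  proof
    assume plat: "vectorial_plateaued p n m s F"
    have SF: "S b x = of_nat (p ^ (n+s)) * f b x" if b: "b \<noteq> 0" for b x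
    proof -
      have sq: "of_real ((cmod (W b w))\<^sup>2) * W b w = of_nat (p ^ (n+s)) * W b w" for w
      proof (cases "W b w = 0")
        case False
        hence "cmod (W b w) = real p powr ((real n + real s) / 2)"
          using plat b walsh_eq[of b w] unfolding vectorial_plateaued_def by (metis insert_iff singletonD norm_eq_zero)
        hence "(cmod (W b w))\<^sup>2 = real (p ^ (n+s))" using pw4 by simp
        thus ?thesis by simp
      qed simp
      have "(\<Sum>x\<in>UNIV. (S b x - of_nat (p ^ (n+s)) * f b x) * \<psi>A (-(w*x))) = 0" for w
      proof -
        have "(\<Sum>x\<in>UNIV. (S b x - of_nat (p ^ (n+s)) * f b x) * \<psi>A (-(w*x)))
            = (\<Sum>x\<in>UNIV. S b x * \<psi>A (-(w*x))) - of_nat (p ^ (n+s)) * W b w"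
          unfolding W_def by (simp add: algebra_simps sum_subtractf sum_distrib_left)
        thus ?thesis using K sq by simp
      qed
      from inversion[where \<psi>=\<psi>A, OF addA orthA pn0 this]
      show ?thesis by simp
    qed
    have S0: "S 0 x = of_nat (p ^ (2*n))" for x
      unfolding S_def using B0 assms(5) by (simp add: power_mult_distrib power2_eq_square mult_2 power_add)
    have Sb: "S b x = of_nat (p ^ (n+s)) * f b x + (if b = 0 then of_nat (p ^ (2*n)) - of_nat (p ^ (n+s)) else 0)" for b x
    proof (cases "b = 0")
      case True
      then show ?thesis using S0[of x] B0 by (simp add: f_def)
    qed (simp add: SF)
    show "\<forall>x y. real (\<Sum>a\<in>UNIV. card {u::'a. y = F (u + x - a) - F u + F a}) =
       (if y \<noteq> F x
        then real p powr (2 * real n - real m) - real p powr (real n + real s - real m)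
        else real p powr (real n + real s) + real p powr (2 * real n - real m)
               - real p powr (real n + real s - real m))"
    proof (intro allI)
      fix x y
      define G where "G a u = F (u + x - a) - F u + F a" for a u
      have "(of_nat (Nc x y) :: complex) = (\<Sum>a\<in>UNIV. \<Sum>u\<in>UNIV. if y = G a u then 1 else 0)"
        unfolding G_def by (rule Nc_sum)
      also have "\<dots> = (\<Sum>a\<in>UNIV. \<Sum>u\<in>UNIV. (\<Sum>b\<in>UNIV. \<psi>B (b * (G a u - y))) / of_nat (p ^ m))"
        using p0 by (intro sum.cong refl) (auto simp: orthB pm0)
      also have "\<dots> = (\<Sum>b\<in>UNIV. \<Sum>a\<in>UNIV. \<Sum>u\<in>UNIV. \<psi>B (b * G a u) * \<psi>B (-(b * y))) / of_nat (p ^ m)"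
      proof -
        have e: "\<psi>B (b * (G a u - y)) = \<psi>B (b * G a u) * \<psi>B (-(b * y))" for a u b
        proof -
          have "b * (G a u - y) = b * G a u + (-(b * y))" by (simp add: algebra_simps)
          thus ?thesis by (simp only: addB)
        qed
        have "(\<Sum>a\<in>UNIV. \<Sum>u\<in>UNIV. (\<Sum>b\<in>UNIV. \<psi>B (b * (G a u - y))) / of_nat (p ^ m))
            = (\<Sum>a\<in>UNIV. \<Sum>u\<in>UNIV. \<Sum>b\<in>UNIV. \<psi>B (b * G a u) * \<psi>B (-(b * y))) / of_nat (p ^ m)"
          by (simp only: sum_divide_distrib e)
        also have "(\<Sum>a\<in>UNIV. \<Sum>u\<in>UNIV. \<Sum>b\<in>UNIV. \<psi>B (b * G a u) * \<psi>B (-(b * y)))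
            = (\<Sum>b\<in>UNIV. \<Sum>a\<in>UNIV. \<Sum>u\<in>UNIV. \<psi>B (b * G a u) * \<psi>B (-(b * y)))"
          by (subst sum.swap) (rule sum.cong[OF refl], rule sum.swap)
        finally show ?thesis .
      qed
      also have "\<dots> = (\<Sum>b\<in>UNIV. \<psi>B (-(b * y)) * S b x) / of_nat (p ^ m)"
        unfolding S_def G_def by (simp add: sum_distrib_left sum_distrib_right mult.commute)
      also have "(\<Sum>b\<in>UNIV. \<psi>B (-(b * y)) * S b x)
          = of_nat (p ^ (n+s)) * (if F x - y = 0 then of_nat (p ^ m) else 0)
            + (of_nat (p ^ (2*n)) - of_nat (p ^ (n+s)))"
      proof -
        have e: "\<psi>B (-(b * y)) * f b x = \<psi>B (b * (F x - y))" for b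
        proof -
          have "b * (F x - y) = b * F x + (-(b * y))" by (simp add: algebra_simps)
          thus ?thesis unfolding f_def by (simp only: addB mult.commute)
        qed
        have "(\<Sum>b\<in>UNIV. \<psi>B (-(b * y)) * S b x)
            = (\<Sum>b\<in>UNIV. of_nat (p ^ (n+s)) * \<psi>B (b * (F x - y))
                + (if b = 0 then of_nat (p ^ (2*n)) - of_nat (p ^ (n+s)) else 0))"
        proof (rule sum.cong[OF refl])
          fix b :: 'b
          show "\<psi>B (-(b * y)) * S b x = of_nat (p ^ (n+s)) * \<psi>B (b * (F x - y))
                + (if b = 0 then of_nat (p ^ (2*n)) - of_nat (p ^ (n+s)) else 0)"
          proof (cases "b = 0")
            case True then show ?thesis by (simp add: S0 B0)
          next
            case False
            have "\<psi>B (-(b * y)) * S b x = of_nat (p ^ (n+s)) * (\<psi>B (-(b * y)) * f b x)"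
              using SF[OF False] by (simp only: mult_ac)
            then show ?thesis using False by (simp only: e if_False add_0_right)
          qed
        qed
        also have "\<dots> = of_nat (p ^ (n+s)) * (\<Sum>b\<in>UNIV. \<psi>B (b * (F x - y)))
                + (of_nat (p ^ (2*n)) - of_nat (p ^ (n+s)))"
          by (simp add: sum.distrib sum_distrib_left)
        finally show ?thesis by (simp only: orthB)
      qed
      finally have eqc: "(of_nat (Nc x y) :: complex) = (of_nat (p ^ (n+s)) * (if F x - y = 0 then of_nat (p ^ m) else 0)
            + (of_nat (p ^ (2*n)) - of_nat (p ^ (n+s)))) / of_nat (p ^ m)" .
      have "complex_of_real (real (Nc x y)) = complex_of_real (if y \<noteq> F x
        then real p powr (2 * real n - real m) - real p powr (real n + real s - real m)
        else real p powr (real n + real s) + real p powr (2 * real n - real m)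
               - real p powr (real n + real s - real m))"
      proof (cases "y = F x")
        case True
        have Pm: "(of_nat p :: complex) ^ m \<noteq> 0" using p0 by simp
        have "(of_nat (Nc x y) :: complex) = (of_nat (p ^ (n+s)) * of_nat (p ^ m) + (of_nat (p ^ (2*n)) - of_nat (p ^ (n+s)))) / of_nat (p ^ m)"
          using eqc True by (simp only: diff_self refl if_True)
        also have "\<dots> = of_nat (p ^ (n+s)) + of_nat (p ^ (2*n)) / of_nat (p ^ m) - of_nat (p ^ (n+s)) / of_nat (p ^ m)"
          using pm0 by (simp add: add_divide_distrib diff_divide_distrib)
        finally have "(of_nat (Nc x y) :: complex) = of_nat p ^ (n+s) + of_nat p ^ (2*n) / of_nat p ^ m - of_nat p ^ (n+s) / of_nat p ^ m"
          by simp
        then show ?thesis unfolding pw1 pw2 pw3 using True by simp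
      next
        case False
        hence "F x - y \<noteq> 0" by simp
        hence "(of_nat (Nc x y) :: complex) = of_nat p ^ (2*n) / of_nat p ^ m - of_nat p ^ (n+s) / of_nat p ^ m"
          using eqc by (simp add: diff_divide_distrib)
        then show ?thesis unfolding pw1 pw2 pw3 using False by simp
      qed
      thus "real (\<Sum>a\<in>UNIV. card {u::'a. y = F (u + x - a) - F u + F a}) =
       (if y \<noteq> F x
        then real p powr (2 * real n - real m) - real p powr (real n + real s - real m)
        else real p powr (real n + real s) + real p powr (2 * real n - real m)
               - real p powr (real n + real s - real m))"
        unfolding Nc_def of_real_eq_iff .
    qed
  next
    assume cond0: "\<forall>x y. real (\<Sum>a\<in>UNIV. card {u::'a. y = F (u + x - a) - F u + F a}) = (if y \<noteq> F x
        then real p powr (2 * real n - real m) - real p powr (real n + real s - real m)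
        else real p powr (real n + real s) + real p powr (2 * real n - real m)
               - real p powr (real n + real s - real m))"
    have cond: "\<forall>x y. real (Nc x y) = (if y \<noteq> F x
        then real p powr (2 * real n - real m) - real p powr (real n + real s - real m)
        else real p powr (real n + real s) + real p powr (2 * real n - real m)
               - real p powr (real n + real s - real m))"
      using cond0 unfolding Nc_def .
    show "vectorial_plateaued p n m s F"
      unfolding vectorial_plateaued_def
    proof (intro allI impI)
      fix b :: 'b and w :: 'a
      assume b: "b \<noteq> 0"
      define D where "D = real p powr (real n + real s)"
      define \<alpha> where "\<alpha> = real p powr (2 * real n - real m) - real p powr (real n + real s - real m)"
      have Nc_eq: "(of_nat (Nc x y) :: complex) = of_real \<alpha> + (if y = F x then of_real D else 0)" for x y
      proof -
        have "(of_nat (Nc x y) :: complex) = of_real (real (Nc x y))" by simp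
        also have "\<dots> = of_real \<alpha> + (if y = F x then of_real D else 0)"
          using cond unfolding \<alpha>_def D_def by auto
        finally show ?thesis .
      qed
      have SF: "S b x = of_nat (p ^ (n+s)) * f b x" for x
      proof -
        define G where "G a u = F (u + x - a) - F u + F a" for a u
        have "S b x = (\<Sum>a\<in>UNIV. \<Sum>u\<in>UNIV. \<Sum>y\<in>UNIV. (if y = G a u then 1 else 0) * \<psi>B (b * y))"
        proof -
          have "(\<Sum>y\<in>UNIV. (if y = G a u then 1 else 0) * \<psi>B (b * y)) = \<psi>B (b * G a u)" for a u
          proof -
            have "(\<Sum>y\<in>UNIV. (if y = G a u then 1 else 0) * \<psi>B (b * y)) = (\<Sum>y\<in>UNIV. if y = G a u then \<psi>B (b * y) else 0)"
              by (rule sum.cong) auto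
            also have "\<dots> = \<psi>B (b * G a u)" by (simp add: sum.delta)
            finally show ?thesis .
          qed
          thus ?thesis unfolding S_def G_def by simp
        qed
        also have "\<dots> = (\<Sum>y\<in>UNIV. (\<Sum>a\<in>UNIV. \<Sum>u\<in>UNIV. if y = G a u then 1 else 0) * \<psi>B (b * y))"
          by (subst sum.swap, subst (2) sum.swap) (simp add: sum_distrib_right)
        also have "\<dots> = (\<Sum>y\<in>UNIV. of_nat (Nc x y) * \<psi>B (b * y))"
          unfolding G_def Nc_sum ..
        also have "\<dots> = (\<Sum>y\<in>UNIV. of_real \<alpha> * \<psi>B (y * b) + (if y = F x then of_real D * \<psi>B (b * y) else 0))"
          unfolding Nc_eq by (rule sum.cong[OF refl]) (simp add: algebra_simps)
        also have "\<dots> = of_real \<alpha> * (\<Sum>y\<in>UNIV. \<psi>B (y * b)) + of_real D * \<psi>B (b * F x)"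
          by (simp add: sum.distrib sum_distrib_left)
        also have "\<dots> = of_real D * f b x" using b by (simp add: orthB f_def)
        also have "of_real D = (of_nat (p ^ (n+s)) :: complex)" unfolding D_def pw3 by simp
        finally show ?thesis .
      qed
      have "of_real ((cmod (W b w))\<^sup>2) * W b w = (\<Sum>x\<in>UNIV. S b x * \<psi>A (-(w*x)))" by (rule K[symmetric])
      also have "\<dots> = of_nat (p ^ (n+s)) * W b w"
        unfolding SF W_def by (simp add: sum_distrib_left mult.assoc)
      finally have eqW: "of_real ((cmod (W b w))\<^sup>2) * W b w = of_nat (p ^ (n+s)) * W b w" .
      show "cmod (walsh p n m F b w) \<in> {0, real p powr ((real n + real s) / 2)}"
      proof (cases "W b w = 0")
        case True then show ?thesis by (simp add: walsh_eq)
      next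
        case False
        hence "(of_real ((cmod (W b w))\<^sup>2) :: complex) = of_nat (p ^ (n+s))" using eqW by simp
        hence "(cmod (W b w))\<^sup>2 = real p ^ (n+s)"
          by (metis of_real_eq_iff of_real_of_nat_eq of_nat_power)
        hence "(cmod (W b w))\<^sup>2 = (real p powr ((real n + real s) / 2))\<^sup>2" using pw4 by simp
        hence "cmod (W b w) = real p powr ((real n + real s) / 2)"
          by (subst (asm) power2_eq_iff_nonneg) auto
        thus ?thesis by (simp add: walsh_eq)
      qed
    qed
  qed
qed


end
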